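(* Let $F$, $H$, $K$ and $R$ be fixed monic polynomials in $\mathbb{F}_q[T]$ with $F\mid R$, and let $z$ be a non-negative integer with $z<\deg(R)$. Then \[ \sum_{\substack{A,B\in\mathbb{A}^+\\ \deg(AB)=z\\ AH\equiv BK\ (\mathrm{mod}\ F)\\ AH\neq BK\\ (ABHK,R)=1}}\frac{1}{|AB|^{\frac{1}{2}}}\ll\frac{q^{\frac{z}{2}}(z+1)|HK|}{|F|}. \]
   Context: $q$ is a power of an odd prime, $\mathbb{A}=\mathbb{F}_q[T]$, $\mathbb{A}^+$ is the set of monic polynomials in $\mathbb{A}$, and $|f|=q^{\deg(f)}$ for $f\in\mathbb{A}$. *)

theory Defs
  imports "HOL-Analysis.Analysis" "HOL-Computational_Algebra.Polynomial_Factorial"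
begin

definition monic :: "'a::zero_neq_one poly \<Rightarrow> bool" where
  "monic f \<longleftrightarrow> lead_coeff f = 1"

definition pabs :: "'a::{finite,field} poly \<Rightarrow> real" where
  "pabs f = real CARD('a) ^ degree f"

definition pair_set :: "'a::{finite,field} poly \<Rightarrow> 'a poly \<Rightarrow> 'a poly \<Rightarrow> 'a poly \<Rightarrow> nat
    \<Rightarrow> ('a poly \<times> 'a poly) set" where
  "pair_set F H K R z = {(A, B). monic A \<and> monic B \<and> degree (A * B) = z \<and>
      (A * H) mod F = (B * K) mod F \<and> A * H \<noteq> B * K \<and> coprime (A * B * H * K) R}"

end

theory Submission
  imports Defs
begin

lemma degree_div_le:
  fixes A F :: "'a::field poly"
  assumes "F \<noteq> 0"
  shows "degree (A div F) \<le> degree A - degree F"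
proof (cases "A div F = 0")
  case True then show ?thesis by simp
next
  case False
  have eq: "F * (A div F) + A mod F = A" by simp
  have d1: "degree (F * (A div F)) = degree F + degree (A div F)"
    using False assms by (simp add: degree_mult_eq)
  have "degree A = degree (F * (A div F))"
  proof (cases "A mod F = 0")
    case True then show ?thesis using eq by simp
  next
    case f: False
    have "degree (A mod F) < degree F" using degree_mod_less[OF assms, of A] f by auto
    then have "degree (A mod F) < degree (F * (A div F))" using d1 by simp
    then show ?thesis using eq degree_add_eq_left by metis
  qed
  then show ?thesis using d1 by simp
qed

lemma card_Pd:
  "finite {p::'a::{finite,field} poly. degree p \<le> n} \<and> card {p::'a poly. degree p \<le> n} \<le> CARD('a) ^ Suc n"
proof (induction n)
  case 0
  have "{p::'a poly. degree p \<le> 0} \<subseteq> range (\<lambda>c. [:c:])"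
  proof
    fix p :: "'a poly" assume "p \<in> {p. degree p \<le> 0}"
    then have "degree p = 0" by simp
    then have "p = [:coeff p 0:]" by (rule degree_eq_zeroE) simp
    then show "p \<in> range (\<lambda>c. [:c:])" by (rule image_eqI) simp
  qed
  moreover have "finite (range (\<lambda>c::'a. [:c:]))" by (rule finite_imageI) simp
  moreover have "card (range (\<lambda>c::'a. [:c:])) \<le> CARD('a)" by (rule card_image_le) simp
  ultimately show ?case by (metis One_nat_def card_mono finite_subset order_trans power_one_right)
next
  case (Suc n)
  let ?S = "{p::'a poly. degree p \<le> n}"
  let ?I = "(\<lambda>(c,p). pCons c p) ` ((UNIV::'a set) \<times> ?S)"
  have sub: "{p::'a poly. degree p \<le> Suc n} \<subseteq> ?I"
  proof
    fix p :: "'a poly" assume "p \<in> {p. degree p \<le> Suc n}"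
    then have d: "degree p \<le> Suc n" by simp
    obtain c r where p: "p = pCons c r" by (cases p)
    have "degree r \<le> n" using d p by (auto split: if_splits)
    then show "p \<in> ?I" using p by force
  qed
  have fin: "finite ((UNIV::'a set) \<times> ?S)" using Suc by (intro finite_cartesian_product) auto
  have "card ?I \<le> card ((UNIV::'a set) \<times> ?S)"
    using card_image_le fin by blast
  also have "\<dots> = CARD('a) * card ?S" by (simp add: card_cartesian_product)
  also have "\<dots> \<le> CARD('a) * CARD('a) ^ Suc n" using Suc by simp
  finally have c: "card ?I \<le> CARD('a) ^ Suc (Suc n)" by simp
  have fI: "finite ?I" using fin by (rule finite_imageI)
  have "card {p::'a poly. degree p \<le> Suc n} \<le> card ?I" by (rule card_mono[OF fI sub])
  then show ?case using c finite_subset[OF sub fI] by simp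
qed
lemma coprime_cancel:
  fixes F H X :: "'a::field poly"
  assumes F0: "F \<noteq> 0" and cop: "coprime F H" and d: "F dvd X * H"
  shows "F dvd X"
proof -
  define P :: "'a poly \<Rightarrow> bool" where "P = (\<lambda>w. (\<exists>u t1. w = u*F + t1 * H) \<and> w \<noteq> 0)"
  have "P F" unfolding P_def using F0 by (metis add.right_neutral mult_1 mult_zero_left)
  then obtain D where PD: "P D" and mn: "\<And>E. P E \<Longrightarrow> degree D \<le> degree E"
    using ex_has_least_nat[of P F degree] by blast
  obtain u t1 where Duv: "D = u*F + t1 * H" and D0: "D \<noteq> 0" using PD unfolding P_def by blast
  have key: "D dvd Y" if "Y = u'*F + t2*H" for Y u' t2
  proof (rule ccontr)
    assume nd: "\<not> D dvd Y"
    then have m0: "Y mod D \<noteq> 0" by (simp add: mod_eq_0_iff_dvd)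
    have "Y mod D = Y - (Y div D) * D" by (simp add: minus_div_mult_eq_mod)
    also have "\<dots> = (u' - (Y div D)*u)*F + (t2 - (Y div D)*t1)*H"
      using that Duv by (simp add: algebra_simps)
    finally have "P (Y mod D)" unfolding P_def using m0 by blast
    then have "degree D \<le> degree (Y mod D)" by (rule mn)
    moreover have "degree (Y mod D) < degree D" using degree_mod_less[OF D0, of Y] m0 by auto
    ultimately show False by simp
  qed
  have "D dvd F" using key[of F 1 0] by simp
  moreover have "D dvd H" using key[of H 0 1] by simp
  ultimately have u: "is_unit D" using cop coprime_common_divisor by blast
  have "F dvd X * D" unfolding Duv using d
    by (simp add: distrib_left) (metis dvd_add dvd_mult dvd_triv_right mult.left_commute)
  then show ?thesis using u by (simp add: dvd_mult_unit_iff)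
qed

lemma core:
  fixes F H K :: "'a::{finite,field} poly"
  assumes F0: "F \<noteq> 0" and cop: "coprime H F" and dk: "b + degree K \<le> a + degree H"
   and S: "S \<subseteq> {(A,B). degree A \<le> a \<and> degree B \<le> b \<and> (A*H) mod F = (B*K) mod F \<and> A*H \<noteq> B*K}"
  shows "card S * CARD('a)^degree F \<le> CARD('a)^(a+b+degree H+degree K+2)"
proof (cases "S = {}")
  case True then show ?thesis by simp
next
  case False
  then obtain A0 B0 where AB0: "(A0,B0) \<in> S" by auto
  have "F dvd A0*H - B0*K" using AB0 S mod_eq_dvd_iff by blast
  moreover have "A0*H - B0*K \<noteq> 0" using AB0 S by auto
  ultimately have "degree F \<le> degree (A0*H - B0*K)" by (rule dvd_imp_degree_le)
  also have "\<dots> \<le> max (degree (A0*H)) (degree (B0*K))" by (rule degree_diff_le_max)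
  also have "\<dots> \<le> a + degree H" using AB0 S degree_mult_le[of A0 H] degree_mult_le[of B0 K] dk by auto
  finally have fa: "degree F \<le> a + degree H" .
  let ?phi = "\<lambda>(A::'a poly,B::'a poly). (B, A div F)"
  have inj: "inj_on ?phi S"
  proof (rule inj_onI)
    fix x y assume x: "x \<in> S" and y: "y \<in> S" and e: "?phi x = ?phi y"
    obtain A B where xe: "x = (A,B)" by fastforce
    obtain A' B' where ye: "y = (A',B')" by fastforce
    have BB: "B' = B" and dd: "A div F = A' div F" using e xe ye by auto
    have m1: "(A*H) mod F = (B*K) mod F" using x xe S by auto
    have m2: "(A'*H) mod F = (B*K) mod F" using y ye S BB by auto
    have "F dvd A*H - A'*H" using m1 m2 mod_eq_dvd_iff by metis
    then have "F dvd (A - A')*H" by (simp add: algebra_simps)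
    moreover have cFH: "coprime F H" using cop by (simp add: coprime_commute)
    ultimately have "F dvd A - A'" using coprime_cancel[OF F0 cFH] by blast
    then have "A mod F = A' mod F" using mod_eq_dvd_iff by blast
    then have "A = A'" using dd by (metis div_mult_mod_eq)
    then show "x = y" using xe ye BB by simp
  qed
  have img: "?phi ` S \<subseteq> {p. degree p \<le> b} \<times> {p. degree p \<le> a - degree F}"
  proof
    fix y assume "y \<in> ?phi ` S"
    then obtain A B where AB: "(A,B) \<in> S" and y: "y = (B, A div F)" by auto
    have "degree (A div F) \<le> degree A - degree F" by (rule degree_div_le[OF F0])
    also have "\<dots> \<le> a - degree F" using AB S by auto
    finally show "y \<in> {p. degree p \<le> b} \<times> {p. degree p \<le> a - degree F}" using AB S y by auto
  qed
  have fin: "finite ({p::'a poly. degree p \<le> b} \<times> {p::'a poly. degree p \<le> a - degree F})"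
    using card_Pd[of b] card_Pd[of "a - degree F"] by (intro finite_cartesian_product) auto
  have "card S \<le> card ({p::'a poly. degree p \<le> b} \<times> {p::'a poly. degree p \<le> a - degree F})"
    using card_inj_on_le[OF inj img fin] .
  also have "\<dots> \<le> CARD('a)^Suc b * CARD('a)^Suc (a - degree F)"
    using card_Pd[of b, where 'a='a] card_Pd[of "a - degree F", where 'a='a]
    by (simp only: card_cartesian_product) (intro mult_le_mono; simp)
  finally have "card S * CARD('a)^degree F \<le> CARD('a)^Suc b * CARD('a)^Suc (a - degree F) * CARD('a)^degree F"
    by (rule mult_right_mono) simp
  also have "\<dots> = CARD('a)^(Suc b + Suc (a - degree F) + degree F)" by (simp add: power_add)
  also have "\<dots> \<le> CARD('a)^(a+b+degree H+degree K+2)"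
    by (rule power_increasing) (use fa in auto)
  finally show ?thesis .
qed


theorem lemma3p4:
  assumes "odd (CARD('a::{finite,field}))"
  shows "\<exists>C>0. \<forall>(F::'a poly) H K R (z::nat).
           monic F \<and> monic H \<and> monic K \<and> monic R \<and> F dvd R \<and> z < degree R \<longrightarrow>
           (\<Sum>(A, B)\<in>pair_set F H K R z. 1 / sqrt (pabs (A * B)))
             \<le> C * (sqrt (real CARD('a) ^ z) * real (z + 1) * pabs (H * K) / pabs F)"
proof -
  define q where "q = CARD('a)"
  have q1: "0 < q" unfolding q_def by simp
  show ?thesis
  proof (intro exI[of _ "real q ^ 2"] conjI allI impI)
    show "0 < real q ^ 2" using q1 by simp
    fix F H K R :: "'a poly" and z :: nat
    assume h: "monic F \<and> monic H \<and> monic K \<and> monic R \<and> F dvd R \<and> z < degree R"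
    have F0: "F \<noteq> 0" and H0: "H \<noteq> 0" and K0: "K \<noteq> 0"
      using h by (auto simp: monic_def)
    let ?P = "pair_set F H K R z"
    have mem: "monic A \<and> monic B \<and> degree A + degree B = z \<and> (A * H) mod F = (B * K) mod F
       \<and> A * H \<noteq> B * K \<and> coprime (A * B * H * K) R" if "(A, B) \<in> ?P" for A B
    proof -
      have "A \<noteq> 0" "B \<noteq> 0" using that by (auto simp: pair_set_def monic_def)
      then show ?thesis using that by (auto simp: pair_set_def degree_mult_eq)
    qed
    have sumeq: "(\<Sum>(A, B)\<in>?P. 1 / sqrt (pabs (A * B))) = (\<Sum>p\<in>?P. 1 / sqrt (real q ^ z))"
      by (rule sum.cong) (auto simp: pair_set_def pabs_def q_def)
    have cardb: "card ?P * q ^ degree F \<le> (z + 1) * q ^ (z + degree H + degree K + 2)"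
    proof (cases "?P = {}")
      case True then show ?thesis by simp
    next
      case False
      then obtain A0 B0 where AB0: "(A0, B0) \<in> ?P" by auto
      then have c0: "coprime (A0 * B0 * H * K) R" using mem by blast
      obtain c where Rc: "R = F * c" using h by (auto elim: dvdE)
      have cH: "coprime H F"
        by (rule coprime_imp_coprime[OF c0]) (auto simp: Rc)
      have cK: "coprime K F"
        by (rule coprime_imp_coprime[OF c0]) (auto simp: Rc)
      define T where "T a = {p \<in> ?P. degree (fst p) = a}" for a
      have Peq: "?P = (\<Union>a\<in>{..z}. T a)"
      proof
        show "?P \<subseteq> (\<Union>a\<in>{..z}. T a)"
        proof
          fix p assume p: "p \<in> ?P"
          obtain A B where pe: "p = (A, B)" by fastforce
          have "degree A \<le> z" using mem[of A B] p pe by auto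
          then show "p \<in> (\<Union>a\<in>{..z}. T a)" using p pe by (auto simp: T_def)
        qed
      qed (auto simp: T_def)
      have Tb: "card (T a) * q ^ degree F \<le> q ^ (z + degree H + degree K + 2)" if az: "a \<le> z" for a
      proof (cases "(z - a) + degree K \<le> a + degree H")
        case True
        have sub: "T a \<subseteq> {(A,B). degree A \<le> a \<and> degree B \<le> z - a \<and> (A*H) mod F = (B*K) mod F \<and> A*H \<noteq> B*K}"
        proof
          fix p assume p: "p \<in> T a"
          obtain A B where pe: "p = (A, B)" by fastforce
          show "p \<in> {(A,B). degree A \<le> a \<and> degree B \<le> z - a \<and> (A*H) mod F = (B*K) mod F \<and> A*H \<noteq> B*K}"
            using mem[of A B] p pe by (auto simp: T_def)
        qed
        have ex: "a + (z - a) + degree H + degree K + 2 = z + degree H + degree K + 2" using az by simp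
        show ?thesis using core[OF F0 cH True sub] unfolding ex q_def .
      next
        case False
        then have dk: "a + degree H \<le> (z - a) + degree K" by simp
        let ?S = "(\<lambda>(A::'a poly, B::'a poly). (B, A)) ` T a"
        have sub: "?S \<subseteq> {(X,Y). degree X \<le> z - a \<and> degree Y \<le> a \<and> (X*K) mod F = (Y*H) mod F \<and> X*K \<noteq> Y*H}"
        proof
          fix p assume "p \<in> ?S"
          then obtain A B where p: "(A, B) \<in> T a" and pe: "p = (B, A)" by auto
          show "p \<in> {(X,Y). degree X \<le> z - a \<and> degree Y \<le> a \<and> (X*K) mod F = (Y*H) mod F \<and> X*K \<noteq> Y*H}"
            using mem[of A B] p pe by (auto simp: T_def)
        qed
        have cS: "card ?S = card (T a)" by (rule card_image) (auto simp: inj_on_def)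
        have ex: "(z - a) + a + degree K + degree H + 2 = z + degree H + degree K + 2" using az by simp
        show ?thesis using core[OF F0 cK dk sub] unfolding ex cS q_def .
      qed
      have "card ?P \<le> (\<Sum>a\<le>z. card (T a))" unfolding Peq by (rule card_UN_le) simp
      then have "card ?P * q ^ degree F \<le> (\<Sum>a\<le>z. card (T a)) * q ^ degree F"
        by (rule mult_right_mono) simp
      also have "\<dots> = (\<Sum>a\<le>z. card (T a) * q ^ degree F)" by (simp add: sum_distrib_right)
      also have "\<dots> \<le> (\<Sum>a\<le>z. q ^ (z + degree H + degree K + 2))" by (rule sum_mono) (use Tb in auto)
      also have "\<dots> = (z + 1) * q ^ (z + degree H + degree K + 2)" by simp
      finally show ?thesis .
    qed
    define s where "s = sqrt (real q ^ z)"
    have s0: "0 < s" using q1 by (simp add: s_def)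
    have ss: "s * s = real q ^ z" using q1 by (simp add: s_def)
    have pHK: "pabs (H * K) = real q ^ (degree H + degree K)"
      using H0 K0 by (simp add: pabs_def q_def degree_mult_eq)
    have pF: "pabs F = real q ^ degree F" by (simp add: pabs_def q_def)
    have qf: "0 < real q ^ degree F" using q1 by simp
    have r: "real (card ?P) * real q ^ degree F \<le> real (z + 1) * real q ^ (z + degree H + degree K + 2)"
      using cardb by (metis of_nat_le_iff of_nat_mult of_nat_power)
    have e: "real q ^ (z + degree H + degree K + 2) = s * s * real q ^ (degree H + degree K) * real q ^ 2"
      unfolding ss by (simp add: power_add power2_eq_square)
    show "(\<Sum>(A, B)\<in>?P. 1 / sqrt (pabs (A * B)))
             \<le> real q ^ 2 * (sqrt (real CARD('a) ^ z) * real (z + 1) * pabs (H * K) / pabs F)"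
    proof -
      have lhs: "(\<Sum>(A, B)\<in>?P. 1 / sqrt (pabs (A * B))) = real (card ?P) / s"
        unfolding sumeq s_def by simp
      have "real (card ?P) / s \<le> real q ^ 2 * (s * real (z + 1) * real q ^ (degree H + degree K) / real q ^ degree F)"
        using r s0 qf unfolding e by (simp add: field_simps)
      then show ?thesis unfolding lhs pHK pF s_def q_def .
    qed
  qed
qed

end
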